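(* Let $1\le k<N/2$ and $l\ge1$. Consider identifying an unknown $x\in\{0,1\}^N$ with $wt(x)=k$ using the balance oracle under the restriction that every query (in every superposition) places at most $l$ coins on the pans. Then every quantum algorithm that identifies $x$ with bounded error needs $\Omega\big(\sqrt{kN/(l\min(k,l))}\big)$ queries. In particular it needs $\Omega(\sqrt{N/l})$ queries.
   Context: Counterfeit coin model: $x\in\{0,1\}^N$, $x_i=1$ meaning coin $i$ is false; $k=wt(x)$ (Hamming weight) is known and $k<N/2$. Queries are strings $q\in\{0,1,-1\}^N$ with equally many entries $1$ and $-1$ ($1$: left pan, $-1$: right pan, $0$: not weighed); $\chi(x;q)=0$ if $\sum_iq_ix_i=0$ (balanced) and $1$ otherwise. The balance oracle is the unitary $|q\rangle\mapsto(-1)^{\chi(x;q)}|q\rangle$ (equivalently $|q,a\rangle\mapsto|q,a\oplus\chi(x;q)\rangle$). "At most $l$ coins on the pans" means only query strings with at most $l$ nonzero entries may be queried. Bounded error: output equals $x$ with probability at least a constant such as $2/3$ for every admissible $x$. *)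

theory Defs
  imports Complex_Main
begin

text \<open>Coins are indexed 0..N-1. A configuration x of false coins is the set of
  indices i with x_i = 1 (a subset of {..<N}); wt(x) = card x.\<close>

definition queries :: "nat \<Rightarrow> nat \<Rightarrow> (nat \<Rightarrow> int) set" where
  "queries N l = {q. (\<forall>i. q i \<in> {-1, 0, 1}) \<and> (\<forall>i\<ge>N. q i = 0)
      \<and> card {i. q i = 1} = card {i. q i = -1}
      \<and> card {i. q i \<noteq> 0} \<le> l}"

definition chi :: "nat \<Rightarrow> nat set \<Rightarrow> (nat \<Rightarrow> int) \<Rightarrow> nat" where
  "chi N x q = (if (\<Sum>i<N. q i * of_bool (i \<in> x)) = 0 then 0 else 1)"

text \<open>Basis states: pairs (query register, workspace register).
  Vectors are functions on the basis, only their values on the index set S matter.\<close>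
type_synonym idx = "(nat \<Rightarrow> int) \<times> nat"
type_synonym qvec = "idx \<Rightarrow> complex"
type_synonym qmat = "idx \<Rightarrow> idx \<Rightarrow> complex"

definition apply_mat :: "idx set \<Rightarrow> qmat \<Rightarrow> qvec \<Rightarrow> qvec" where
  "apply_mat S M v = (\<lambda>a. \<Sum>b\<in>S. M a b * v b)"

definition unitary_on :: "idx set \<Rightarrow> qmat \<Rightarrow> bool" where
  "unitary_on S M \<longleftrightarrow> (\<forall>a\<in>S. \<forall>b\<in>S. (\<Sum>c\<in>S. cnj (M c a) * M c b) = of_bool (a = b))"

definition balance_oracle :: "nat \<Rightarrow> nat set \<Rightarrow> qvec \<Rightarrow> qvec" where
  "balance_oracle N x v = (\<lambda>(q, w). (-1) ^ chi N x q * v (q, w))"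

fun run :: "idx set \<Rightarrow> nat \<Rightarrow> nat set \<Rightarrow> (nat \<Rightarrow> qmat) \<Rightarrow> qvec \<Rightarrow> nat \<Rightarrow> qvec" where
  "run S N x Us psi0 0 = apply_mat S (Us 0) psi0"
| "run S N x Us psi0 (Suc t) = apply_mat S (Us (Suc t)) (balance_oracle N x (run S N x Us psi0 t))"

definition success_prob ::
  "idx set \<Rightarrow> nat \<Rightarrow> nat set \<Rightarrow> (nat \<Rightarrow> qmat) \<Rightarrow> qvec \<Rightarrow> nat \<Rightarrow> (idx \<Rightarrow> nat set) \<Rightarrow> real" where
  "success_prob S N x Us psi0 T out =
     (\<Sum>a\<in>{a\<in>S. out a = x}. (cmod (run S N x Us psi0 T a))^2)"

definition bounded_error_alg ::
  "nat \<Rightarrow> nat \<Rightarrow> nat \<Rightarrow> nat set \<Rightarrow> nat \<Rightarrow> (nat \<Rightarrow> qmat) \<Rightarrow> qvec \<Rightarrow> (idx \<Rightarrow> nat set) \<Rightarrow> bool" where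
  "bounded_error_alg N k l W T Us psi0 out \<longleftrightarrow>
     finite W \<and>
     (\<forall>t\<le>T. unitary_on (queries N l \<times> W) (Us t)) \<and>
     (\<Sum>a\<in>queries N l \<times> W. (cmod (psi0 a))^2) = 1 \<and>
     (\<forall>x. x \<subseteq> {..<N} \<and> card x = k \<longrightarrow>
        success_prob (queries N l \<times> W) N x Us psi0 T out \<ge> 2/3)"

end

theory Submission
  imports Defs
begin


definition ip :: "idx set \<Rightarrow> qvec \<Rightarrow> qvec \<Rightarrow> complex" where
  "ip S u v = (\<Sum>b\<in>S. cnj (u b) * v b)"

definition nrm :: "idx set \<Rightarrow> qvec \<Rightarrow> real" where
  "nrm S u = (\<Sum>b\<in>S. (cmod (u b))^2)"

lemma ip_self: "ip S u u = of_real (nrm S u)"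
  unfolding ip_def nrm_def of_real_sum
proof (rule sum.cong[OF refl])
  fix b show "cnj (u b) * u b = complex_of_real ((cmod (u b))\<^sup>2)"
    by (subst complex_norm_square) (simp add: mult.commute)
qed

lemma unitary_ip:
  assumes "finite S" "unitary_on S M"
  shows "ip S (apply_mat S M u) (apply_mat S M v) = ip S u v"
proof -
  have "ip S (apply_mat S M u) (apply_mat S M v) =
     (\<Sum>c\<in>S. (\<Sum>a\<in>S. cnj (M c a) * cnj (u a)) * (\<Sum>b\<in>S. M c b * v b))"
    unfolding ip_def apply_mat_def by (simp add: cnj_sum)
  also have "\<dots> = (\<Sum>c\<in>S. \<Sum>b\<in>S. \<Sum>a\<in>S. cnj (u a) * v b * (cnj (M c a) * M c b))"
    unfolding sum_distrib_right sum_distrib_left by (simp add: mult_ac)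
  also have "\<dots> = (\<Sum>b\<in>S. \<Sum>c\<in>S. \<Sum>a\<in>S. cnj (u a) * v b * (cnj (M c a) * M c b))"
    by (rule sum.swap)
  also have "\<dots> = (\<Sum>b\<in>S. \<Sum>a\<in>S. \<Sum>c\<in>S. cnj (u a) * v b * (cnj (M c a) * M c b))"
    by (rule sum.cong[OF refl], rule sum.swap)
  also have "\<dots> = (\<Sum>a\<in>S. \<Sum>b\<in>S. \<Sum>c\<in>S. cnj (u a) * v b * (cnj (M c a) * M c b))"
    by (rule sum.swap)
  also have "\<dots> = (\<Sum>a\<in>S. \<Sum>b\<in>S. cnj (u a) * v b * (\<Sum>c\<in>S. cnj (M c a) * M c b))"
    by (simp add: sum_distrib_left)
  also have "\<dots> = (\<Sum>a\<in>S. \<Sum>b\<in>S. cnj (u a) * v b * of_bool (a = b))"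
    using assms(2) unfolding unitary_on_def by simp
  also have "\<dots> = ip S u v"
    unfolding ip_def using assms(1) by (simp add: of_bool_def if_distrib cong: if_cong)
  finally show ?thesis .
qed

lemma amgm:
  fixes a b w :: real
  assumes "0 < w"
  shows "2*a*b \<le> w*a^2 + b^2/w"
proof -
  have "0 \<le> (w*a - b)^2" by simp
  hence "2*a*b*w \<le> w*a^2*w + b^2" by (simp add: power2_eq_square algebra_simps)
  thus ?thesis using assms by (simp add: field_simps)
qed

lemma chi_01: "chi N x q = 0 \<or> chi N x q = 1"
  unfolding chi_def by simp

lemma oracle_term:
  "cmod (cnj (balance_oracle N x u b) * balance_oracle N y v b - cnj (u b) * v b)
    \<le> of_bool (chi N x (fst b) \<noteq> chi N y (fst b)) * (2 * cmod (u b) * cmod (v b))"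
proof -
  obtain q w where b: "b = (q, w)" by (cases b)
  show ?thesis
    using chi_01[of N x q] chi_01[of N y q]
    by (auto simp: b balance_oracle_def norm_mult algebra_simps)
qed

lemma oracle_step:
  "cmod (ip S u v) - (\<Sum>b\<in>S. of_bool (chi N x (fst b) \<noteq> chi N y (fst b)) * (2 * cmod (u b) * cmod (v b)))
    \<le> cmod (ip S (balance_oracle N x u) (balance_oracle N y v))"
proof -
  let ?O = "ip S (balance_oracle N x u) (balance_oracle N y v)"
  have "?O - ip S u v = (\<Sum>b\<in>S. cnj (balance_oracle N x u b) * balance_oracle N y v b - cnj (u b) * v b)"
    unfolding ip_def by (simp add: sum_subtractf)
  hence "cmod (?O - ip S u v) \<le> (\<Sum>b\<in>S. of_bool (chi N x (fst b) \<noteq> chi N y (fst b)) * (2 * cmod (u b) * cmod (v b)))"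
    by (metis (no_types, lifting) norm_sum oracle_term order_trans sum_mono)
  moreover have "cmod (ip S u v) - cmod ?O \<le> cmod (?O - ip S u v)"
    by (metis norm_minus_commute norm_triangle_ineq2)
  ultimately show ?thesis by linarith
qed

lemma ab_le: assumes "(0::real) < w" shows "a*b \<le> (w*a^2 + b^2/w)/2"
proof -
  have "2*(a*b) \<le> w*a^2 + b^2/w" using amgm[OF assms, of a b] by (simp add: mult.assoc)
  thus ?thesis by (simp add: le_divide_eq)
qed

lemma final_ip:
  assumes "finite S" "nrm S u = 1" "nrm S v = 1" "A \<subseteq> S" "B \<subseteq> S" "A \<inter> B = {}"
    "(\<Sum>b\<in>A. (cmod (u b))^2) \<ge> 2/3" "(\<Sum>b\<in>B. (cmod (v b))^2) \<ge> 2/3"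
  shows "cmod (ip S u v) \<le> 17/18"
proof -
  let ?f = "\<lambda>b. cmod (u b) * cmod (v b)"
  let ?U = "\<lambda>b. (cmod (u b))^2" and ?V = "\<lambda>b. (cmod (v b))^2"
  have "cmod (ip S u v) \<le> (\<Sum>b\<in>S. ?f b)"
    unfolding ip_def by (rule order_trans[OF norm_sum]) (simp add: norm_mult)
  also have "\<dots> = (\<Sum>b\<in>A. ?f b) + (\<Sum>b\<in>S-A. ?f b)"
    by (subst sum.subset_diff[OF assms(4,1)]) simp
  also have "(\<Sum>b\<in>A. ?f b) \<le> (\<Sum>b\<in>A. (3/8) * ?U b + (2/3) * ?V b)"
  proof (rule sum_mono)
    fix b show "?f b \<le> (3/8) * ?U b + (2/3) * ?V b"
      using ab_le[of "3/4" "cmod (u b)" "cmod (v b)"] by simp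
  qed
  also have "(\<Sum>b\<in>S-A. ?f b) \<le> (\<Sum>b\<in>S-A. (2/3) * ?U b + (3/8) * ?V b)"
  proof (rule sum_mono)
    fix b show "?f b \<le> (2/3) * ?U b + (3/8) * ?V b"
      using ab_le[of "4/3" "cmod (u b)" "cmod (v b)"] by simp
  qed
  finally have 1: "cmod (ip S u v) \<le> (\<Sum>b\<in>A. (3/8) * ?U b + (2/3) * ?V b) + (\<Sum>b\<in>S-A. (2/3) * ?U b + (3/8) * ?V b)"
    by simp
  have e1: "(\<Sum>b\<in>A. (3/8) * ?U b + (2/3) * ?V b) = (3/8) * sum ?U A + (2/3) * sum ?V A"
    by (simp only: sum.distrib sum_distrib_left)
  have e2: "(\<Sum>b\<in>S-A. (2/3) * ?U b + (3/8) * ?V b) = (2/3) * sum ?U (S-A) + (3/8) * sum ?V (S-A)"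
    by (simp only: sum.distrib sum_distrib_left)
  have su: "sum ?U A + sum ?U (S-A) = 1"
    using assms(2) unfolding nrm_def by (subst (asm) sum.subset_diff[OF assms(4,1)]) simp
  have sv: "sum ?V A + sum ?V (S-A) = 1"
    using assms(3) unfolding nrm_def by (subst (asm) sum.subset_diff[OF assms(4,1)]) simp
  have "sum ?V B \<le> sum ?V (S-A)"
    using assms by (intro sum_mono2) auto
  with 1 e1 e2 su sv assms(7,8) show ?thesis by linarith
qed

definition sw :: "nat set \<Rightarrow> nat \<Rightarrow> nat \<Rightarrow> nat set" where
  "sw x a j = insert j (x - {a})"

definition wt :: "real \<Rightarrow> int \<Rightarrow> real" where
  "wt \<beta> c = (if c \<noteq> 0 then \<beta> else 1/\<beta>)"

definition EE :: "nat \<Rightarrow> nat \<Rightarrow> (nat \<Rightarrow> int) \<Rightarrow> real" where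
  "EE a j q = of_bool (q a \<noteq> 0 \<or> q j \<noteq> 0)"

lemma wt_pos: "0 < \<beta> \<Longrightarrow> 0 < wt \<beta> c"
  unfolding wt_def by auto

lemma chi_sw:
  assumes "q a = 0" "q j = 0"
  shows "chi N (sw x a j) q = chi N x q"
proof -
  have "(\<Sum>i<N. q i * of_bool (i \<in> sw x a j)) = (\<Sum>i<N. q i * of_bool (i \<in> x))"
    by (rule sum.cong) (use assms in \<open>auto simp: sw_def\<close>)
  thus ?thesis by (simp only: chi_def)
qed

lemma triple_term:
  assumes "0 < \<beta>"
  shows "of_bool (chi N x q \<noteq> chi N (sw x a j) q) * (2 * cu * cv)
     \<le> EE a j q * (wt \<beta> (q a) * cu^2 + cv^2 / wt \<beta> (q a))"
proof (cases "q a = 0 \<and> q j = 0")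
  case True thus ?thesis using chi_sw[of q a j N x] by (simp add: EE_def)
next
  case False
  have "2 * cu * cv \<le> wt \<beta> (q a) * cu^2 + cv^2 / wt \<beta> (q a)"
    by (rule amgm[OF wt_pos[OF assms]])
  moreover have "0 \<le> wt \<beta> (q a) * cu^2 + cv^2 / wt \<beta> (q a)"
    using wt_pos[OF assms, of "q a"] by (intro add_nonneg_nonneg) auto
  ultimately show ?thesis using False by (simp add: EE_def)
qed

lemma pair_bound:
  assumes "0 < \<beta>"
  shows "EE a j q * (wt \<beta> (q a) + 1 / wt \<beta> (q j))
    \<le> 2*\<beta>*of_bool (q a \<noteq> 0) + 2/\<beta>*of_bool (q j \<noteq> 0)"
proof -
  have "0 < 1/\<beta>" "1/\<beta> \<le> 2/\<beta>" using assms by (auto simp: divide_right_mono)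
  thus ?thesis using assms unfolding EE_def wt_def by auto
qed

lemma oracle_nrm: "nrm S (balance_oracle N x u) = nrm S u"
  unfolding nrm_def balance_oracle_def
  by (rule sum.cong) (auto simp: norm_mult norm_power split: prod.splits)

lemma unitary_nrm:
  assumes "finite S" "unitary_on S M"
  shows "nrm S (apply_mat S M u) = nrm S u"
  using unitary_ip[OF assms, of u u] by (simp add: ip_self)

lemma sum_bool_card: "finite A \<Longrightarrow> (\<Sum>a\<in>A. of_bool (P a) :: real) = real (card {a\<in>A. P a})"
  by (auto simp: sum.If_cases intro!: arg_cong[where f=card])

lemma count_bound:
  assumes q: "q \<in> queries N l" and x: "x \<subseteq> {..<N}" "card x = k" and b: "0 < \<beta>"
  shows "(\<Sum>p\<in>x \<times> ({..<N} - x). 2*\<beta>*of_bool (q (fst p) \<noteq> 0) + 2/\<beta>*of_bool (q (snd p) \<noteq> 0))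
     \<le> 2*\<beta>*real (min k l)*real N + 2*real k*real l/\<beta>"
proof -
  let ?C = "{..<N} - x"
  have fx: "finite x" using x finite_subset by blast
  have fC: "finite ?C" by simp
  have qz: "\<forall>i\<ge>N. q i = 0" and cl: "card {i. q i \<noteq> 0} \<le> l" using q unfolding queries_def by auto
  have Pf: "{i. q i \<noteq> 0} \<subseteq> {..<N}" using qz by (auto simp: not_less[symmetric])
  hence fP: "finite {i. q i \<noteq> 0}" using finite_subset by blast
  have c1: "card {a\<in>x. q a \<noteq> 0} \<le> min k l"
  proof -
    have "card {a\<in>x. q a \<noteq> 0} \<le> card x" using fx by (intro card_mono) auto
    moreover have "card {a\<in>x. q a \<noteq> 0} \<le> card {i. q i \<noteq> 0}" using fP by (intro card_mono) auto
    ultimately show ?thesis using x cl by auto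
  qed
  have c2: "card {j\<in>?C. q j \<noteq> 0} \<le> l"
  proof -
    have "card {j\<in>?C. q j \<noteq> 0} \<le> card {i. q i \<noteq> 0}" by (rule card_mono[OF fP]) auto
    thus ?thesis using cl by linarith
  qed
  have c3: "card ?C \<le> N" using card_mono[of "{..<N}" ?C] by auto
  have "(\<Sum>p\<in>x \<times> ?C. 2*\<beta>*of_bool (q (fst p) \<noteq> 0) + 2/\<beta>*of_bool (q (snd p) \<noteq> 0))
     = (\<Sum>a\<in>x. \<Sum>j\<in>?C. 2*\<beta>*of_bool (q a \<noteq> 0) + 2/\<beta>*of_bool (q j \<noteq> 0))"
    by (simp add: sum.cartesian_product case_prod_beta')
  also have "\<dots> = 2*\<beta>*real (card ?C) * (\<Sum>a\<in>x. of_bool (q a \<noteq> 0)) + 2/\<beta>*real (card x) * (\<Sum>j\<in>?C. of_bool (q j \<noteq> 0))"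
  proof -
    have "(\<Sum>a\<in>x. \<Sum>j\<in>?C. 2*\<beta>*of_bool (q a \<noteq> 0) + 2/\<beta>*of_bool (q j \<noteq> 0))
       = (\<Sum>a\<in>x. real (card ?C) * (2*\<beta>*of_bool (q a \<noteq> 0))) + (\<Sum>a\<in>x. \<Sum>j\<in>?C. 2/\<beta>*of_bool (q j \<noteq> 0))"
      by (simp add: sum.distrib)
    also have "\<dots> = real (card ?C) * (2*\<beta>) * (\<Sum>a\<in>x. of_bool (q a \<noteq> 0)) + real (card x) * (2/\<beta>) * (\<Sum>j\<in>?C. of_bool (q j \<noteq> 0))"
      by (simp only: sum_distrib_left[symmetric] sum_constant mult.assoc) simp
    finally show ?thesis by (simp add: mult_ac)
  qed
  also have "\<dots> = 2*\<beta>*real (card ?C) * real (card {a\<in>x. q a \<noteq> 0}) + 2/\<beta>*real k * real (card {j\<in>?C. q j \<noteq> 0})"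
    by (simp only: sum_bool_card[OF fx] sum_bool_card[OF fC] x(2))
  also have "\<dots> \<le> 2*\<beta>*real N * real (min k l) + 2/\<beta>*real k * real l"
  proof (rule add_mono)
    show "2*\<beta>*real (card ?C) * real (card {a\<in>x. q a \<noteq> 0}) \<le> 2*\<beta>*real N * real (min k l)"
      using b c1 c3 by (intro mult_mono) auto
    show "2/\<beta>*real k * real (card {j\<in>?C. q j \<noteq> 0}) \<le> 2/\<beta>*real k * real l"
      using b c2 by (intro mult_left_mono) auto
  qed
  finally show ?thesis by (simp add: mult_ac)
qed



lemma sw_props:
  assumes "x \<subseteq> {..<N}" "card x = k" "1 \<le> k" "a \<in> x" "j < N" "j \<notin> x"
  shows "sw x a j \<subseteq> {..<N}" "card (sw x a j) = k" "sw x a j \<noteq> x" "j \<in> sw x a j" "a \<notin> sw x a j"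
    "sw (sw x a j) j a = x"
proof -
  have fx: "finite x" using assms(1) finite_subset by blast
  show "sw x a j \<subseteq> {..<N}" using assms unfolding sw_def by auto
  show "card (sw x a j) = k" using assms fx unfolding sw_def by (simp add: card_Diff_singleton)
  show "sw x a j \<noteq> x" "j \<in> sw x a j" using assms unfolding sw_def by auto
  show "a \<notin> sw x a j" using assms unfolding sw_def by auto
  show "sw (sw x a j) j a = x" using assms unfolding sw_def by auto
qed

lemma EE_sym: "EE a j q = EE j a q"
  unfolding EE_def by auto

lemma main_bound:
  assumes k1: "1 \<le> k" and kN: "2*k < N"
    and alg: "bounded_error_alg N k l W T Us psi0 out" and bpos: "0 < \<beta>"
  shows "real k * real (N - k) \<le> 18 * real T * (2*\<beta>*real (min k l)*real N + 2*real k*real l/\<beta>)"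
proof -
  define S where "S = queries N l \<times> W"
  define \<psi> where "\<psi> x t = run S N x Us psi0 t" for x t
  define X where "X = {x. x \<subseteq> {..<N} \<and> card x = k}"
  define T3 where "T3 = Sigma X (\<lambda>x. x \<times> ({..<N} - x))"
  define \<sigma> where "\<sigma> = (\<lambda>(x, a, j). (sw x a j, j, a))"
  define V where "V = 2*\<beta>*real (min k l)*real N + 2*real k*real l/\<beta>"
  define \<Phi> where "\<Phi> t = (\<Sum>(x, a, j)\<in>T3. cmod (ip S (\<psi> x t) (\<psi> (sw x a j) t)))" for t
  have unit: "\<And>t. t \<le> T \<Longrightarrow> unitary_on S (Us t)"
    and n0: "(\<Sum>a\<in>S. (cmod (psi0 a))^2) = 1"
    and succ: "\<And>x. x \<subseteq> {..<N} \<Longrightarrow> card x = k \<Longrightarrow> success_prob S N x Us psi0 T out \<ge> 2/3"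
    using alg unfolding bounded_error_alg_def S_def by blast+
  have fS: "finite S" by (rule ccontr) (use n0 in simp)
  have nrm1: "nrm S (\<psi> x t) = 1" if "t \<le> T" for x t
    using that
  proof (induction t)
    case 0 thus ?case using unitary_nrm[OF fS unit, of 0 psi0] n0 by (simp add: \<psi>_def nrm_def)
  next
    case (Suc t)
    thus ?case using unitary_nrm[OF fS unit[OF Suc.prems]] oracle_nrm by (simp add: \<psi>_def)
  qed
  have fX: "finite X" unfolding X_def
    by (rule finite_subset[of _ "Pow {..<N}"]) auto
  have X_ne: "{..<k} \<in> X" using kN unfolding X_def by auto
  have fT3: "finite T3" unfolding T3_def using fX X_def
    by (intro finite_SigmaI) (auto intro: finite_subset)
  have T3_mem: "(x, a, j) \<in> T3 \<longleftrightarrow> x \<in> X \<and> a \<in> x \<and> j < N \<and> j \<notin> x" for x a j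
    unfolding T3_def by auto
  have cardT3: "real (card T3) = real (card X) * (real k * real (N - k))"
  proof -
    have "card T3 = (\<Sum>x\<in>X. card (x \<times> ({..<N} - x)))"
      unfolding T3_def using fX X_def by (subst card_SigmaI) (auto intro: finite_subset)
    also have "\<dots> = (\<Sum>x\<in>X. k * (N - k))"
    proof (rule sum.cong[OF refl])
      fix x assume "x \<in> X"
      hence "x \<subseteq> {..<N}" "card x = k" unfolding X_def by auto
      moreover hence "finite x" using finite_subset by blast
      ultimately show "card (x \<times> ({..<N} - x)) = k * (N - k)"
        by (simp add: card_cartesian_product card_Diff_subset)
    qed
    finally show ?thesis by simp
  qed
  have Phi0: "\<Phi> 0 = real (card T3)"
  proof -
    have "\<Phi> 0 = (\<Sum>(x, a, j)\<in>T3. 1)"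
      unfolding \<Phi>_def
      by (rule sum.cong[OF refl]) (auto simp: \<psi>_def ip_self nrm1[of 0, unfolded \<psi>_def, simplified])
    thus ?thesis by simp
  qed
  have PhiT: "\<Phi> T \<le> 17/18 * real (card T3)"
  proof -
    have "\<Phi> T \<le> (\<Sum>(x, a, j)\<in>T3. 17/18)"
      unfolding \<Phi>_def
    proof (rule sum_mono)
      fix \<tau> assume "\<tau> \<in> T3"
      then obtain x a j where \<tau>: "\<tau> = (x, a, j)" and x: "x \<subseteq> {..<N}" "card x = k" and aj: "a \<in> x" "j < N" "j \<notin> x"
        unfolding T3_def X_def by auto
      note sp = sw_props[OF x k1 aj]
      let ?y = "sw x a j"
      have "cmod (ip S (\<psi> x T) (\<psi> ?y T)) \<le> 17/18"
      proof (rule final_ip[OF fS nrm1 nrm1, of _ _ "{b\<in>S. out b = x}" "{b\<in>S. out b = ?y}"])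
        show "{b\<in>S. out b = x} \<inter> {b\<in>S. out b = ?y} = {}" using sp by auto
        show "2/3 \<le> (\<Sum>b\<in>{b\<in>S. out b = x}. (cmod (\<psi> x T b))^2)"
          using succ[OF x] unfolding success_prob_def \<psi>_def by simp
        show "2/3 \<le> (\<Sum>b\<in>{b\<in>S. out b = ?y}. (cmod (\<psi> ?y T b))^2)"
          using succ[OF sp(1,2)] unfolding success_prob_def \<psi>_def by simp
      qed auto
      thus "(case \<tau> of (x, a, j) \<Rightarrow> cmod (ip S (\<psi> x T) (\<psi> (sw x a j) T))) \<le> (case \<tau> of (x, a, j) \<Rightarrow> 17/18)"
        by (simp add: \<tau>)
    qed
    thus ?thesis by simp
  qed

  define U where "U x t b = (cmod (\<psi> x t b))^2" for x t b
  define G1 where "G1 t = (\<lambda>(x, a, j). \<Sum>b\<in>S. EE a j (fst b) * wt \<beta> (fst b a) * U x t b)" for t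
  define H where "H t = (\<lambda>(x, a, j). \<Sum>b\<in>S. EE a j (fst b) * U x t b / wt \<beta> (fst b j))" for t
  have step: "\<Phi> t - \<Phi> (Suc t) \<le> real (card X) * V" if tT: "t < T" for t
  proof -
    have tmb: "cmod (ip S (\<psi> x t) (\<psi> (sw x a j) t)) - cmod (ip S (\<psi> x (Suc t)) (\<psi> (sw x a j) (Suc t)))
       \<le> G1 t (x, a, j) + H t (\<sigma> (x, a, j))" if "(x, a, j) \<in> T3" for x a j
    proof -
      let ?y = "sw x a j"
      have ipS: "ip S (\<psi> x (Suc t)) (\<psi> ?y (Suc t)) = ip S (balance_oracle N x (\<psi> x t)) (balance_oracle N ?y (\<psi> ?y t))"
        unfolding \<psi>_def using unitary_ip[OF fS unit[of "Suc t"]] tT by simp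
      have "(\<Sum>b\<in>S. of_bool (chi N x (fst b) \<noteq> chi N ?y (fst b)) * (2 * cmod (\<psi> x t b) * cmod (\<psi> ?y t b)))
         \<le> (\<Sum>b\<in>S. EE a j (fst b) * (wt \<beta> (fst b a) * (cmod (\<psi> x t b))^2 + (cmod (\<psi> ?y t b))^2 / wt \<beta> (fst b a)))"
        by (rule sum_mono, rule triple_term[OF bpos])
      also have "\<dots> = G1 t (x, a, j) + H t (\<sigma> (x, a, j))"
        unfolding G1_def H_def \<sigma>_def U_def split EE_sym[of j a] sum.distrib[symmetric]
        by (rule sum.cong[OF refl]) (simp add: distrib_left mult.assoc)
      finally show ?thesis using oracle_step[of S "\<psi> x t" "\<psi> ?y t" N x ?y] unfolding ipS by linarith
    qed
    have "\<Phi> t - \<Phi> (Suc t) = (\<Sum>(x, a, j)\<in>T3. cmod (ip S (\<psi> x t) (\<psi> (sw x a j) t)) - cmod (ip S (\<psi> x (Suc t)) (\<psi> (sw x a j) (Suc t))))"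
      unfolding \<Phi>_def by (simp add: sum_subtractf case_prod_beta')
    also have "\<dots> \<le> (\<Sum>\<tau>\<in>T3. G1 t \<tau> + H t (\<sigma> \<tau>))"
      by (rule sum_mono) (use tmb in auto)
    also have "\<dots> = (\<Sum>\<tau>\<in>T3. G1 t \<tau>) + (\<Sum>\<tau>\<in>T3. H t (\<sigma> \<tau>))"
      by (rule sum.distrib)
    also have "(\<Sum>\<tau>\<in>T3. H t (\<sigma> \<tau>)) = (\<Sum>\<tau>\<in>T3. H t \<tau>)"
    proof (rule sum.reindex_bij_witness[where i=\<sigma> and j=\<sigma>])
      fix \<tau> assume "\<tau> \<in> T3"
      then obtain x a j where \<tau>: "\<tau> = (x, a, j)" and x: "x \<subseteq> {..<N}" "card x = k" and aj: "a \<in> x" "j < N" "j \<notin> x"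
        unfolding T3_def X_def by auto
      note sp = sw_props[OF x k1 aj]
      show "\<sigma> (\<sigma> \<tau>) = \<tau>" using sp by (simp add: \<sigma>_def \<tau>)
      show "\<sigma> (\<sigma> \<tau>) = \<tau>" using sp by (simp add: \<sigma>_def \<tau>)
      show "\<sigma> \<tau> \<in> T3" using sp aj x by (auto simp: \<sigma>_def \<tau> T3_mem X_def)
      show "\<sigma> \<tau> \<in> T3" using sp aj x by (auto simp: \<sigma>_def \<tau> T3_mem X_def)
    qed simp
    also have "(\<Sum>\<tau>\<in>T3. G1 t \<tau>) + (\<Sum>\<tau>\<in>T3. H t \<tau>) = (\<Sum>\<tau>\<in>T3. G1 t \<tau> + H t \<tau>)"
      by (rule sum.distrib[symmetric])
    also have "\<dots> \<le> (\<Sum>(x, a, j)\<in>T3. \<Sum>b\<in>S. U x t b * (2*\<beta>*of_bool (fst b a \<noteq> 0) + 2/\<beta>*of_bool (fst b j \<noteq> 0)))"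
    proof (rule sum_mono)
      fix \<tau> assume "\<tau> \<in> T3"
      obtain x a j where \<tau>: "\<tau> = (x, a, j)" by (cases \<tau>)
      have "G1 t \<tau> + H t \<tau> = (\<Sum>b\<in>S. U x t b * (EE a j (fst b) * (wt \<beta> (fst b a) + 1 / wt \<beta> (fst b j))))"
        unfolding G1_def H_def \<tau> split sum.distrib[symmetric]
        by (rule sum.cong[OF refl]) (simp add: distrib_left mult_ac)
      also have "\<dots> \<le> (\<Sum>b\<in>S. U x t b * (2*\<beta>*of_bool (fst b a \<noteq> 0) + 2/\<beta>*of_bool (fst b j \<noteq> 0)))"
        by (rule sum_mono, rule mult_left_mono, rule pair_bound[OF bpos]) (simp add: U_def)
      finally show "G1 t \<tau> + H t \<tau> \<le> (case \<tau> of (x, a, j) \<Rightarrow> \<Sum>b\<in>S. U x t b * (2*\<beta>*of_bool (fst b a \<noteq> 0) + 2/\<beta>*of_bool (fst b j \<noteq> 0)))"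
        by (simp add: \<tau>)
    qed
    also have "\<dots> = (\<Sum>x\<in>X. \<Sum>p\<in>x \<times> ({..<N} - x). \<Sum>b\<in>S. U x t b * (2*\<beta>*of_bool (fst b (fst p) \<noteq> 0) + 2/\<beta>*of_bool (fst b (snd p) \<noteq> 0)))"
      unfolding T3_def using fX X_def
      by (subst sum.Sigma[symmetric]) (auto intro: finite_subset simp: case_prod_beta')
    also have "\<dots> = (\<Sum>x\<in>X. \<Sum>b\<in>S. U x t b * (\<Sum>p\<in>x \<times> ({..<N} - x). 2*\<beta>*of_bool (fst b (fst p) \<noteq> 0) + 2/\<beta>*of_bool (fst b (snd p) \<noteq> 0)))"
      by (rule sum.cong[OF refl], subst sum.swap) (simp add: sum_distrib_left)
    also have "\<dots> \<le> (\<Sum>x\<in>X. \<Sum>b\<in>S. U x t b * V)"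
    proof (intro sum_mono mult_left_mono)
      fix x b assume "x \<in> X" "b \<in> S"
      thus "(\<Sum>p\<in>x \<times> ({..<N} - x). 2*\<beta>*of_bool (fst b (fst p) \<noteq> 0) + 2/\<beta>*of_bool (fst b (snd p) \<noteq> 0)) \<le> V"
        unfolding V_def X_def S_def by (intro count_bound[OF _ _ _ bpos]) auto
      show "0 \<le> U x t b" by (simp add: U_def)
    qed
    also have "\<dots> = (\<Sum>x\<in>X. V)"
      using nrm1[of t] tT unfolding U_def nrm_def by (simp add: sum_distrib_right[symmetric])
    finally show ?thesis by simp
  qed
  have tele: "\<Phi> 0 - \<Phi> t \<le> real t * (real (card X) * V)" if "t \<le> T" for t
    using that
  proof (induction t)
    case 0 thus ?case by simp
  next
    case (Suc t)
    hence "\<Phi> 0 - \<Phi> t \<le> real t * (real (card X) * V)" by simp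
    moreover have "\<Phi> t - \<Phi> (Suc t) \<le> real (card X) * V" using Suc.prems by (intro step) simp
    ultimately show ?case by (simp add: algebra_simps)
  qed
  have cX: "0 < real (card X)" using fX X_ne card_gt_0_iff by fastforce
  have "real (card X) * (real k * real (N - k)) \<le> 18 * (real T * (real (card X) * V))"
    using tele[of T] Phi0 PhiT cardT3 by simp
  hence "real (card X) * (real k * real (N - k)) \<le> real (card X) * (18 * real T * V)"
    by (simp add: algebra_simps)
  hence "real k * real (N - k) \<le> 18 * real T * V"
    using cX by (simp only: mult_le_cancel_left_pos)
  thus ?thesis unfolding V_def .
qed



theorem theorem5:
  shows "\<exists>c>0. \<forall>N k l W T Us psi0 out.
     1 \<le> k \<longrightarrow> 2 * k < N \<longrightarrow> 1 \<le> l \<longrightarrow>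
     bounded_error_alg N k l W T Us psi0 out \<longrightarrow>
       real T \<ge> c * sqrt (real k * real N / (real l * real (min k l)))
     \<and> real T \<ge> c * sqrt (real N / real l)"
proof (intro exI[of _ "1/144"] conjI allI impI)
  show "(0::real) < 1/144" by simp
  fix N k l W T Us psi0 out
  assume k1: "1 \<le> k" and kN: "2 * k < N" and l1: "1 \<le> l" and alg: "bounded_error_alg N k l W T Us psi0 out"
  define m where "m = min k l"
  have m1: "1 \<le> m" using k1 l1 by (simp add: m_def)
  have mk: "real m \<le> real k" by (simp add: m_def)
  define s where "s = sqrt (real k * real l * real m * real N)"
  have kpos: "0 < real k" and lpos: "0 < real l" and mpos: "0 < real m" and Npos: "0 < real N"
    using k1 l1 m1 kN by auto
  have spos: "0 < s" unfolding s_def using kpos lpos mpos Npos by simp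
  have s2: "s * s = real k * real l * real m * real N"
    unfolding s_def using kpos lpos mpos Npos by (simp del: real_sqrt_mult)
  define \<beta> where "\<beta> = s / (real m * real N)"
  have bpos: "0 < \<beta>" unfolding \<beta>_def using spos mpos Npos by simp
  have V: "2*\<beta>*real m*real N + 2*real k*real l/\<beta> = 4 * s"
  proof -
    have "2*\<beta>*real m*real N = 2 * s" unfolding \<beta>_def using mpos Npos by simp
    moreover have "2*real k*real l/\<beta> = 2 * s"
      unfolding \<beta>_def using mpos Npos spos s2 by (simp add: field_simps)
    ultimately show ?thesis by simp
  qed
  have mb: "real k * real (N - k) \<le> 18 * real T * (4 * s)"
    using main_bound[OF k1 kN alg bpos] V unfolding m_def by simp
  have "real (N - k) \<ge> real N / 2" using kN by (simp add: of_nat_diff)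
  hence "real k * (real N / 2) \<le> real k * real (N - k)" using kpos by (simp add: mult_left_mono)
  with mb have key: "real k * real N \<le> 144 * real T * s" by simp
  have sq: "sqrt (real k * real N / (real l * real m)) = real k * real N / s"
  proof -
    have "(real k * real N / s)^2 = real k * real N / (real l * real m)"
      using s2 spos kpos lpos mpos Npos by (simp add: power2_eq_square field_simps)
    moreover have "0 \<le> real k * real N / s" using spos by simp
    ultimately show ?thesis by (metis real_sqrt_abs abs_of_nonneg)
  qed
  have g1: "1/144 * sqrt (real k * real N / (real l * real m)) \<le> real T"
    unfolding sq using key spos by (simp add: field_simps)
  thus "1/144 * sqrt (real k * real N / (real l * real (min k l))) \<le> real T"
    unfolding m_def .
  have "real N / real l \<le> real k * real N / (real l * real m)"
  proof -
    have "real N / real l = real m * real N / (real l * real m)" using mpos by simp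
    also have "\<dots> \<le> real k * real N / (real l * real m)"
      using mk Npos lpos mpos by (intro divide_right_mono mult_right_mono) auto
    finally show ?thesis .
  qed
  hence "sqrt (real N / real l) \<le> sqrt (real k * real N / (real l * real m))"
    by (rule real_sqrt_le_mono)
  with g1 show "1/144 * sqrt (real N / real l) \<le> real T" by linarith
qed

end
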